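(* Let $m_1=m_2=1$, $a>0$, $c\in\mathbb{C}\setminus\{0\}$, and consider the Dirac-type system $y'(x,z)=i(zJ+JV(x))y(x,z)$ on $[0,\infty)$ with $J=\operatorname{diag}(1,-1)$, $V=\begin{bmatrix}0&v\\ \overline v&0\end{bmatrix}$ and $v(x)=ci$ for $x\in[0,a]$, $v(x)=0$ for $x>a$. Then its Weyl–Titchmarsh function is $\widetilde\varphi(z,c)=\psi(z,|c|^2)$, where \[ \psi(z,\lambda)=i\,\overline c\,\frac{1-e^{2iaq(z,\lambda)}}{z+q(z,\lambda)-(z-q(z,\lambda))e^{2iaq(z,\lambda)}},\qquad q(z,\lambda)=(z^2-\lambda)^{1/2}, \] for $\Im z>0$, the branch of the square root being chosen with $\Im\big((z^2-\lambda)^{1/2}\big)>0$.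
   Context: With $u(x,z)$ the $2\times2$ fundamental solution satisfying $u(0,z)=I_2$, the Weyl–Titchmarsh function is the unique function $\widetilde\varphi(z,c)$ holomorphic in $\mathbb{C}_+$ such that $u(\cdot,z)\begin{bmatrix}1\\ \widetilde\varphi(z,c)\end{bmatrix}\in \big[L^2((0,\infty))\big]^2$. *)

theory Defs
  imports "HOL-Analysis.Analysis"
begin

definition Jm :: "complex^2^2" where
  "Jm = (\<chi> i j. if i = j then (if i = 1 then 1 else -1) else 0)"

definition vpot :: "complex \<Rightarrow> real \<Rightarrow> real \<Rightarrow> complex" where
  "vpot c a x = (if 0 \<le> x \<and> x \<le> a then c * \<i> else 0)"

definition Vm :: "complex \<Rightarrow> real \<Rightarrow> real \<Rightarrow> complex^2^2" where
  "Vm c a x = (\<chi> i j. if i = j then 0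
                 else if i = 1 then vpot c a x else cnj (vpot c a x))"

definition dirac_coeff :: "complex \<Rightarrow> real \<Rightarrow> complex \<Rightarrow> real \<Rightarrow> complex^2^2" where
  "dirac_coeff c a z x = (\<chi> i j. \<i> * (z * Jm $ i $ j + (Jm ** Vm c a x) $ i $ j))"

text \<open>Fundamental solution u(x,z) on [0,\<infinity>) with u(0,z) = I:
  continuous (absolutely continuous) in x and satisfying the equation
  u' = i(zJ+JV)u at every x \<ge> 0 except at the jump point a of V.\<close>
definition fundamental_solution ::
  "(complex \<Rightarrow> real \<Rightarrow> complex^2^2) \<Rightarrow> real \<Rightarrow> (real \<Rightarrow> complex \<Rightarrow> complex^2^2) \<Rightarrow> bool" where
  "fundamental_solution A a u \<longleftrightarrow>
     (\<forall>z. u 0 z = mat 1 \<and>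
          continuous_on {0..} (\<lambda>x. u x z) \<and>
          (\<forall>x. 0 \<le> x \<and> x \<noteq> a \<longrightarrow>
             ((\<lambda>t. u t z) has_vector_derivative (A z x ** u x z)) (at x within {0..})))"

definition square_integrable_on :: "(real \<Rightarrow> complex^2) \<Rightarrow> real set \<Rightarrow> bool" where
  "square_integrable_on f S \<longleftrightarrow>
     set_borel_measurable lborel S f \<and> set_integrable lborel S (\<lambda>x. (norm (f x))\<^sup>2)"

definition weyl_property :: "(real \<Rightarrow> complex \<Rightarrow> complex^2^2) \<Rightarrow> (complex \<Rightarrow> complex) \<Rightarrow> bool" where
  "weyl_property u \<phi> \<longleftrightarrow>
     \<phi> holomorphic_on {z. Im z > 0} \<and>
     (\<forall>z. Im z > 0 \<longrightarrow>
        square_integrable_on (\<lambda>x. u x z *v vector [1, \<phi> z]) {0<..})"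

definition qroot :: "complex \<Rightarrow> real \<Rightarrow> complex" where
  "qroot z lam = (THE w. w\<^sup>2 = z\<^sup>2 - of_real lam \<and> Im w > 0)"

definition psi :: "complex \<Rightarrow> real \<Rightarrow> complex \<Rightarrow> real \<Rightarrow> complex" where
  "psi c a z lam = (let q = qroot z lam; e = exp (2 * \<i> * of_real a * q) in
      \<i> * cnj c * (1 - e) / (z + q - (z - q) * e))"

end

theory Submission imports Defs "HOL-Probability.Sinc_Integral" begin


lemma csqrt_Re_pos:
  fixes z :: complex and lam :: real
  assumes "Im z > 0" "lam > 0"
  shows "Re (csqrt (of_real lam - z\<^sup>2)) > 0"
proof (rule ccontr)
  let ?w = "of_real lam - z\<^sup>2"
  assume "\<not> ?thesis"
  then have re0: "Re (csqrt ?w) = 0" using csqrt_principal[of ?w] by auto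
  have "?w = (csqrt ?w)\<^sup>2" by simp
  also have "\<dots> = - (Im (csqrt ?w))\<^sup>2" using re0
    by (simp add: complex_eq_iff power2_eq_square)
  finally have e: "?w = - (Im (csqrt ?w))\<^sup>2" .
  then have "Im ?w = 0" by (metis Im_complex_of_real minus_zero of_real_minus of_real_power Im_complex_of_real)
  then have "Re z * Im z = 0" by (auto simp: power2_eq_square)
  then have "Re z = 0" using assms by simp
  then have "Re ?w = lam + (Im z)\<^sup>2" by (simp add: power2_eq_square)
  moreover have "Re ?w \<le> 0" using e by (metis Re_complex_of_real neg_le_0_iff_le of_real_minus of_real_power zero_le_power2)
  ultimately show False using assms by (smt (verit) zero_le_power2)
qed

lemma qroot_eq:
  fixes z :: complex and lam :: real
  assumes "Im z > 0" "lam > 0"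
  shows "qroot z lam = \<i> * csqrt (of_real lam - z\<^sup>2)"
  unfolding qroot_def
proof (rule the_equality)
  show "(\<i> * csqrt (of_real lam - z\<^sup>2))\<^sup>2 = z\<^sup>2 - of_real lam \<and> 0 < Im (\<i> * csqrt (of_real lam - z\<^sup>2))"
    using csqrt_Re_pos[OF assms] by (simp add: power_mult_distrib)
  fix w assume w: "w\<^sup>2 = z\<^sup>2 - of_real lam \<and> 0 < Im w"
  let ?r = "\<i> * csqrt (of_real lam - z\<^sup>2)"
  have r2: "?r\<^sup>2 = z\<^sup>2 - of_real lam" by (simp add: power_mult_distrib)
  have "(w - ?r) * (w + ?r) = w\<^sup>2 - ?r\<^sup>2" by (simp add: algebra_simps power2_eq_square)
  then have "(w - ?r) * (w + ?r) = 0" using w r2 by simp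
  then have "w = ?r \<or> w = - ?r" by (auto simp: eq_neg_iff_add_eq_0)
  moreover have "Im ?r > 0" using csqrt_Re_pos[OF assms] by simp
  ultimately show "w = ?r" using w by auto
qed

lemma qroot_props:
  fixes z :: complex and lam :: real
  assumes "Im z > 0" "lam > 0"
  shows "(qroot z lam)\<^sup>2 = z\<^sup>2 - of_real lam" "Im (qroot z lam) > 0"
  using qroot_eq[OF assms] csqrt_Re_pos[OF assms] by (simp_all add: power_mult_distrib)

lemma denom_nz:
  fixes z q :: complex and lam a :: real
  assumes "Im z > 0" "lam > 0" "q\<^sup>2 = z\<^sup>2 - of_real lam" "Im q > 0" "a > 0"
  shows "z + q - (z - q) * exp (2 * \<i> * of_real a * q) \<noteq> 0"
proof
  let ?e = "exp (2 * \<i> * of_real a * q)"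
  assume D: "z + q - (z - q) * ?e = 0"
  have ne: "norm ?e < 1" using assms by (simp add: norm_exp_eq_Re)
  have "Im (q\<^sup>2) = Im (z\<^sup>2)" using assms(3) by simp
  then have xy: "Re q * Im q = Re z * Im z" by (simp add: power2_eq_square mult.commute)
  have "Re z * Re q \<ge> 0"
  proof -
    have "Re z * Re q * (Im z * Im q) = (Re q * Im q) * (Re q * Im q)" using xy by (simp add: algebra_simps)
    then have "Re z * Re q * (Im z * Im q) \<ge> 0" by (metis zero_le_square)
    moreover have "Im z * Im q > 0" using assms by simp
    ultimately show ?thesis by (simp add: zero_le_mult_iff)
  qed
  then have "(cmod (z - q))\<^sup>2 < (cmod (z + q))\<^sup>2"
  proof -
    have "(cmod (z + q))\<^sup>2 - (cmod (z - q))\<^sup>2 = 4 * (Re z * Re q + Im z * Im q)"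
      by (simp only: cmod_power2) (simp add: power2_eq_square algebra_simps)
    moreover have "Im z * Im q > 0" using assms by simp
    ultimately show ?thesis using \<open>Re z * Re q \<ge> 0\<close> by (smt (verit))
  qed
  then have lt: "cmod (z - q) < cmod (z + q)" by (simp add: power_less_imp_less_base)
  have "cmod (z + q) = cmod (z - q) * norm ?e" using D by (metis eq_iff_diff_eq_0 norm_mult)
  also have "\<dots> \<le> cmod (z - q)" using ne by (simp add: mult_left_le)
  finally show False using lt by simp
qed

lemma not_nonpos:
  fixes z :: complex and lam :: real
  assumes "Im z > 0" "lam > 0"
  shows "of_real lam - z\<^sup>2 \<notin> \<real>\<^sub>\<le>\<^sub>0"
proof
  assume "of_real lam - z\<^sup>2 \<in> \<real>\<^sub>\<le>\<^sub>0"
  then have h: "Re (of_real lam - z\<^sup>2) \<le> 0" "Im (of_real lam - z\<^sup>2) = 0"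
    by (auto simp: complex_nonpos_Reals_iff)
  from h(2) have "Re z * Im z = 0" by (auto simp: power2_eq_square)
  then have "Re z = 0" using assms by simp
  then have "Re (of_real lam - z\<^sup>2) = lam + (Im z)\<^sup>2" by (simp add: power2_eq_square)
  then show False using h(1) assms by (smt (verit) zero_le_power2)
qed

lemma psi_holo:
  fixes a lam :: real and c :: complex
  assumes "a > 0" "lam > 0"
  shows "(\<lambda>z. psi c a z lam) holomorphic_on {z. Im z > 0}"
proof -
  let ?Q = "\<lambda>z. \<i> * csqrt (of_real lam - z\<^sup>2)"
  let ?F = "\<lambda>z. \<i> * cnj c * (1 - exp (2 * \<i> * of_real a * ?Q z)) /
                 (z + ?Q z - (z - ?Q z) * exp (2 * \<i> * of_real a * ?Q z))"
  have "?F holomorphic_on {z. Im z > 0}"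
  proof -
    have nn: "of_real lam - z\<^sup>2 \<notin> \<real>\<^sub>\<le>\<^sub>0" if "z \<in> {z. Im z > 0}" for z
      using not_nonpos[of z lam] that assms by simp
    have dn: "z + ?Q z - (z - ?Q z) * exp (2 * \<i> * of_real a * ?Q z) \<noteq> 0" if "z \<in> {z. Im z > 0}" for z
    proof -
      have z: "Im z > 0" using that by simp
      show ?thesis
      using denom_nz[OF z assms(2) qroot_props[OF z assms(2)] assms(1)] qroot_eq[OF z assms(2)] by simp
    qed
    show ?thesis using nn dn by (auto intro!: holomorphic_intros)
  qed
  moreover have "psi c a z lam = ?F z" if "z \<in> {z. Im z > 0}" for z
    using qroot_eq[of z lam] that assms by (simp add: psi_def Let_def)
  ultimately show ?thesis by (subst holomorphic_cong[OF refl]) auto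
qed



lemma dc_in:
  assumes "0 \<le> x" "x \<le> a"
  shows "dirac_coeff c a z x $1$1 = \<i> * z" "dirac_coeff c a z x $1$2 = - c"
        "dirac_coeff c a z x $2$1 = - cnj c" "dirac_coeff c a z x $2$2 = - \<i> * z"
  using assms by (simp_all add: dirac_coeff_def Jm_def Vm_def vpot_def matrix_matrix_mult_def sum_2 algebra_simps)

lemma dc_out:
  assumes "a < x"
  shows "dirac_coeff c a z x $1$1 = \<i> * z" "dirac_coeff c a z x $1$2 = 0"
        "dirac_coeff c a z x $2$1 = 0" "dirac_coeff c a z x $2$2 = - \<i> * z"
  using assms by (simp_all add: dirac_coeff_def Jm_def Vm_def vpot_def matrix_matrix_mult_def sum_2)

lemma mv_comp: "((A::complex^2^2) *v v) $ k = A$k$1 * v$1 + A$k$2 * v$2"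
  by (simp add: matrix_vector_mult_def sum_2)

lemma bl_comp: "bounded_linear (\<lambda>M::complex^2^2. (M *v w) $ k)"
proof -
  have "bounded_linear (\<lambda>M::complex^2^2. M$k$1 * w$1 + M$k$2 * w$2)"
  proof -
    have g: "bounded_linear (\<lambda>M::complex^2^2. M$k$j)" for j
      by (rule bounded_linear_compose[OF bounded_linear_vec_nth[of j] bounded_linear_vec_nth[of k]])
    have "bounded_linear (\<lambda>M::complex^2^2. M$k$j * w$j)" for j
      using bounded_linear_compose[OF bounded_linear_mult_left g] by simp
    then show ?thesis by (intro bounded_linear_add)
  qed
  then show ?thesis by (simp add: mv_comp)
qed

lemma comp_deriv:
  assumes fs: "fundamental_solution A a u" and x: "0 \<le> x" "x \<noteq> a"
  shows "((\<lambda>t. (u t z *v w) $ k) has_vector_derivative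
           (A z x $k$1 * (u x z *v w)$1 + A z x $k$2 * (u x z *v w)$2)) (at x within {0..})"
proof -
  have "((\<lambda>t. u t z) has_vector_derivative (A z x ** u x z)) (at x within {0..})"
    using fs x unfolding fundamental_solution_def by blast
  from bounded_linear.has_vector_derivative[OF bl_comp this, of w k]
  show ?thesis by (simp add: matrix_vector_mul_assoc[symmetric] mv_comp)
qed

lemma comp_cont:
  assumes fs: "fundamental_solution A a u"
  shows "continuous_on {0..} (\<lambda>t. (u t z *v w) $ k)"
  using bounded_linear.continuous_on[OF bl_comp, of "{0..}" "\<lambda>t. u t z"] fs
  unfolding fundamental_solution_def by blast



lemma dexp_lin:
  fixes q b :: complex
  shows "((\<lambda>x::real. exp (b * (of_real a - of_real x))) has_vector_derivative
          (- b * exp (b * (of_real a - of_real x)))) (at x within S)"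
proof -
  have "((\<lambda>s. exp (b * (of_real a - s))) has_field_derivative
          (exp (b * (of_real a - of_real x)) * (- b))) (at (of_real x))"
    by (auto intro!: derivative_eq_intros)
  from has_vector_derivative_real_field[OF this, where s=S] show ?thesis by (simp add: mult.commute)
qed

lemma inner_relation:
  fixes u :: "real \<Rightarrow> complex \<Rightarrow> complex^2^2"
  assumes fs: "fundamental_solution (dirac_coeff c a) a u" and a: "a > 0"
    and q2: "q\<^sup>2 = z\<^sup>2 - of_real ((cmod c)\<^sup>2)"
  shows "2 * q * (u a z *v vector [1, p]) $ 2 * exp (\<i> * q * of_real a)
         = \<i> * cnj c * (exp (2 * \<i> * of_real a * q) - 1)
           + p * ((z + q) - (z - q) * exp (2 * \<i> * of_real a * q))"
proof -
  define w :: "complex^2" where "w = vector [1, p]"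
  define y where "y k x = (u x z *v w) $ k" for k x
  define P where "P x = exp (\<i> * q * (of_real a - of_real x))" for x :: real
  define M where "M x = exp ((- \<i> * q) * (of_real a - of_real x))" for x :: real
  define h where "h x = \<i> * cnj c * (P x - M x) * y 1 x + ((z + q) * M x - (z - q) * P x) * y 2 x" for x
  have cc: "cnj c * c = z\<^sup>2 - q\<^sup>2" using q2 complex_norm_square[of c] by (simp add: mult.commute)
  have dP: "(P has_vector_derivative (- (\<i> * q) * P x)) (at x within S)" for x S
    unfolding P_def by (rule dexp_lin)
  have dM: "(M has_vector_derivative (- (- \<i> * q) * M x)) (at x within S)" for x S
    unfolding M_def by (rule dexp_lin)
  have dy: "(y k has_vector_derivative
           (dirac_coeff c a z x $k$1 * y 1 x + dirac_coeff c a z x $k$2 * y 2 x)) (at x within {0..a})"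
    if "x \<in> {0..a} - {a}" for x k
    using has_vector_derivative_within_subset[OF comp_deriv[OF fs, of x z w k]] that
    unfolding y_def by auto
  have dh: "(h has_derivative (\<lambda>h. 0)) (at x within {0..a})" if x: "x \<in> {0..a} - {a}" for x
  proof -
    have "(h has_vector_derivative
       (\<i> * cnj c * (P x - M x) * (dirac_coeff c a z x $1$1 * y 1 x + dirac_coeff c a z x $1$2 * y 2 x)
        + \<i> * cnj c * (- (\<i> * q) * P x - - (- \<i> * q) * M x) * y 1 x
        + (((z + q) * M x - (z - q) * P x) * (dirac_coeff c a z x $2$1 * y 1 x + dirac_coeff c a z x $2$2 * y 2 x)
        + ((z + q) * (- (- \<i> * q) * M x) - (z - q) * (- (\<i> * q) * P x)) * y 2 x)))
       (at x within {0..a})"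
      unfolding h_def
      by (intro has_vector_derivative_add has_vector_derivative_mult has_vector_derivative_diff
          has_vector_derivative_mult_right dP dM dy[OF x])
    moreover have "\<i> * cnj c * (P x - M x) * (dirac_coeff c a z x $1$1 * y 1 x + dirac_coeff c a z x $1$2 * y 2 x)
        + \<i> * cnj c * (- (\<i> * q) * P x - - (- \<i> * q) * M x) * y 1 x
        + (((z + q) * M x - (z - q) * P x) * (dirac_coeff c a z x $2$1 * y 1 x + dirac_coeff c a z x $2$2 * y 2 x)
        + ((z + q) * (- (- \<i> * q) * M x) - (z - q) * (- (\<i> * q) * P x)) * y 2 x) = 0"
    proof -
      have xx: "0 \<le> x" "x \<le> a" using x by auto
      have ii: "\<i> * \<i> = (-1::complex)" by simp
      show ?thesis unfolding dc_in[OF xx] using cc ii by algebra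
    qed
    ultimately show ?thesis by (simp add: has_vector_derivative_def)
  qed
  have cont: "continuous_on {0..a} h"
  proof -
    have "continuous_on {0..a} (y k)" for k
      using continuous_on_subset[OF comp_cont[OF fs, of z w k]] unfolding y_def by auto
    moreover have "continuous_on {0..a} P" "continuous_on {0..a} M"
      unfolding P_def M_def by (intro continuous_intros)+
    ultimately show ?thesis unfolding h_def by (intro continuous_intros)
  qed
  have "h a = h 0"
    by (rule has_derivative_zero_unique_strong_interval[of "{a}" 0 a h]) (use cont dh a in auto)
  moreover have "h a = 2 * q * y 2 a" by (simp add: h_def P_def M_def)
  moreover have "h 0 = \<i> * cnj c * (exp (\<i> * q * of_real a) - exp (- \<i> * q * of_real a)) * 1
      + ((z + q) * exp (- \<i> * q * of_real a) - (z - q) * exp (\<i> * q * of_real a)) * p"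
    by (simp add: h_def P_def M_def y_def w_def fs[unfolded fundamental_solution_def])
  moreover have "exp (\<i> * q * of_real a) * exp (- \<i> * q * of_real a) = 1"
    by (simp add: exp_add[symmetric])
  moreover have "exp (\<i> * q * of_real a) * exp (\<i> * q * of_real a) = exp (2 * \<i> * of_real a * q)"
    by (simp add: exp_add[symmetric] algebra_simps)
  moreover have ii: "\<i> * \<i> = (-1::complex)" by simp
  ultimately show ?thesis unfolding y_def w_def by algebra
qed



lemma outer_relation:
  fixes u :: "real \<Rightarrow> complex \<Rightarrow> complex^2^2"
  assumes fs: "fundamental_solution (dirac_coeff c a) a u" and a: "a > 0" and x: "x \<ge> a"
  shows "exp (\<i> * z * (of_real a - of_real x)) * (u x z *v w) $ 1 = (u a z *v w) $ 1"
        "exp (- \<i> * z * (of_real a - of_real x)) * (u x z *v w) $ 2 = (u a z *v w) $ 2"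
proof -
  define y where "y k t = (u t z *v w) $ k" for k t
  have dy: "(y k has_vector_derivative
           (dirac_coeff c a z t $k$1 * y 1 t + dirac_coeff c a z t $k$2 * y 2 t)) (at t within {a..x})"
    if "t \<in> {a..x} - {a}" for t k
    using has_vector_derivative_within_subset[OF comp_deriv[OF fs, of t z w k]] that a
    unfolding y_def by auto
  have main: "exp (b * (of_real a - of_real x)) * y k x = y k a"
    if bk: "\<And>t. t \<in> {a..x} - {a} \<Longrightarrow>
       dirac_coeff c a z t $k$1 * y 1 t + dirac_coeff c a z t $k$2 * y 2 t = b * y k t" for b k
  proof -
    define g where "g t = exp (b * (of_real a - of_real t)) * y k t" for t
    have dg: "(g has_derivative (\<lambda>h. 0)) (at t within {a..x})" if t: "t \<in> {a..x} - {a}" for t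
    proof -
      have "(g has_vector_derivative (exp (b * (of_real a - of_real t)) * (b * y k t)
              + (- b * exp (b * (of_real a - of_real t))) * y k t)) (at t within {a..x})"
        unfolding g_def using dy[OF t, of k] bk[OF t]
        by (intro has_vector_derivative_mult dexp_lin) auto
      then show ?thesis by (simp add: has_vector_derivative_def algebra_simps)
    qed
    have cont: "continuous_on {a..x} g"
    proof -
      have "continuous_on {a..x} (y k)"
        using continuous_on_subset[OF comp_cont[OF fs, of z w k]] a unfolding y_def by auto
      then show ?thesis unfolding g_def by (intro continuous_intros)
    qed
    have "g x = g a"
      by (rule has_derivative_zero_unique_strong_interval[of "{a}" a x g]) (use cont dg x in auto)
    then show ?thesis by (simp add: g_def)
  qed
  show "exp (\<i> * z * (of_real a - of_real x)) * (u x z *v w) $ 1 = (u a z *v w) $ 1"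
    using main[of 1 "\<i> * z"] dc_out[of a] unfolding y_def by auto
  show "exp (- \<i> * z * (of_real a - of_real x)) * (u x z *v w) $ 2 = (u a z *v w) $ 2"
    using main[of 2 "- \<i> * z"] dc_out[of a] unfolding y_def by auto
qed



lemma normsq2: "(norm (v::complex^2))\<^sup>2 = (cmod (v$1))\<^sup>2 + (cmod (v$2))\<^sup>2"
  by (simp add: norm_vec_def L2_set_def sum_2)

lemma mul_exp_solve: "(A::real) * exp t = B \<Longrightarrow> A = exp (- t) * B"
  by (auto simp: exp_minus field_simps)

lemma Ici_not_finite:
  assumes "set_integrable lborel {a::real..} (\<lambda>_. K::real)" "K \<noteq> 0"
  shows False
proof -
  have "set_integrable lborel {a..} (\<lambda>_. (1/K) * K)"
    using set_integrable_mult_right[OF assms(1), of "1/K"] by simp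
  then have "integrable lborel (indicator {a..} :: real \<Rightarrow> real)"
    using assms(2) by (simp add: set_integrable_def)
  then have fin: "emeasure lborel {a..} < \<infinity>" by (simp add: integrable_indicator_iff)
  define m where "m = measure lborel {a..}"
  have em: "emeasure lborel {a..} = ennreal m"
    unfolding m_def using fin by (simp add: emeasure_eq_ennreal_measure less_top)
  have "emeasure lborel {a..a + (m + 1)} \<le> emeasure lborel {a..}"
    by (rule emeasure_mono) auto
  moreover have "m \<ge> 0" unfolding m_def by simp
  ultimately have "ennreal (m + 1) \<le> ennreal m" using em by simp
  then show False using \<open>m \<ge> 0\<close> by (simp add: ennreal_le_iff)
qed

lemma sq_int_iff:
  fixes u :: "real \<Rightarrow> complex \<Rightarrow> complex^2^2"
  assumes fs: "fundamental_solution (dirac_coeff c a) a u" and a: "a > 0" and z: "Im z > 0"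
  shows "square_integrable_on (\<lambda>x. u x z *v w) {0<..} \<longleftrightarrow> (u a z *v w) $ 2 = 0"
proof -
  define y where "y k t = (u t z *v w) $ k" for k t
  define F where "F t = (cmod (y 1 t))\<^sup>2 + (cmod (y 2 t))\<^sup>2" for t
  have nF: "(\<lambda>x. (norm (u x z *v w))\<^sup>2) = F" by (simp add: F_def y_def normsq2 fun_eq_iff)
  have cy: "continuous_on {0..} (y k)" for k unfolding y_def by (rule comp_cont[OF fs])
  have cF: "continuous_on {0..} F" unfolding F_def by (intro continuous_intros cy)
  have cv: "continuous_on {0..} (\<lambda>x. u x z *v w)"
  proof -
    have "continuous_on {0..} (\<lambda>x. \<chi> k. y k x)" by (intro continuous_intros cy)
    then show ?thesis by (simp add: y_def vec_lambda_eta)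
  qed
  have mv: "set_borel_measurable lborel {0<..} (\<lambda>x. u x z *v w)"
    unfolding set_borel_measurable_def
    by (simp, rule borel_measurable_continuous_on_indicator, simp, rule continuous_on_subset[OF cv], auto)
  have mF: "set_borel_measurable lborel S F" if "S \<subseteq> {0..}" "S \<in> sets borel" for S
    unfolding set_borel_measurable_def
    unfolding measurable_lborel2
    by (rule borel_measurable_continuous_on_indicator) (use continuous_on_subset[OF cF] that in auto)
  have y1: "cmod (y 1 x) = exp (- Im z * (x - a)) * cmod (y 1 a)" if "x \<ge> a" for x
  proof -
    have "cmod (exp (\<i> * z * (of_real a - of_real x))) * cmod (y 1 x) = cmod (y 1 a)"
      using arg_cong[OF outer_relation(1)[OF fs a that, of z w], of cmod] unfolding y_def norm_mult .
    moreover have "cmod (exp (\<i> * z * (of_real a - of_real x))) = exp (Im z * (x - a))"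
      by (simp add: norm_exp_eq_Re right_diff_distrib mult.commute)
    ultimately have "cmod (y 1 x) * exp (Im z * (x - a)) = cmod (y 1 a)"
      by (simp add: mult.commute)
    from mul_exp_solve[OF this] show ?thesis by simp
  qed
  have y2: "cmod (y 2 x) = exp (Im z * (x - a)) * cmod (y 2 a)" if "x \<ge> a" for x
  proof -
    have "cmod (exp (- \<i> * z * (of_real a - of_real x))) * cmod (y 2 x) = cmod (y 2 a)"
      using arg_cong[OF outer_relation(2)[OF fs a that, of z w], of cmod] unfolding y_def norm_mult .
    moreover have "cmod (exp (- \<i> * z * (of_real a - of_real x))) = exp (- (Im z * (x - a)))"
      by (simp add: norm_exp_eq_Re right_diff_distrib mult.commute)
    ultimately have "cmod (y 2 x) * exp (- (Im z * (x - a))) = cmod (y 2 a)"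
      by (simp add: mult.commute)
    from mul_exp_solve[OF this] show ?thesis by simp
  qed
  show ?thesis
  proof
    assume si: "square_integrable_on (\<lambda>x. u x z *v w) {0<..}"
    show "(u a z *v w) $ 2 = 0"
    proof (rule ccontr)
      assume ne: "(u a z *v w) $ 2 \<noteq> 0"
      have "set_integrable lborel {0<..} F" using si nF by (simp add: square_integrable_on_def)
      then have "set_integrable lborel {a..} F" by (rule set_integrable_subset) (use a in auto)
      then have "set_integrable lborel {a..} (\<lambda>_. (cmod (y 2 a))\<^sup>2)"
      proof (rule set_integrable_bound)
        show "set_borel_measurable lborel {a..} (\<lambda>_. (cmod (y 2 a))\<^sup>2)"
          by (simp add: set_borel_measurable_def)
        show "AE x in lborel. x \<in> {a..} \<longrightarrow> norm ((cmod (y 2 a))\<^sup>2) \<le> norm (F x)"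
        proof (intro AE_I2 impI)
          fix x assume "x \<in> {a..}"
          then have x: "x \<ge> a" by simp
          have "1 \<le> exp (Im z * (x - a))" using z x by simp
          then have "cmod (y 2 a) \<le> cmod (y 2 x)" unfolding y2[OF x]
            using mult_right_mono[OF \<open>1 \<le> exp (Im z * (x - a))\<close> norm_ge_zero[of "y 2 a"]] by simp
          then have "(cmod (y 2 a))\<^sup>2 \<le> (cmod (y 2 x))\<^sup>2" by (simp add: power_mono)
          then have "F x \<ge> (cmod (y 2 a))\<^sup>2" unfolding F_def using zero_le_power2[of "cmod (y 1 x)"] by linarith
          then show "norm ((cmod (y 2 a))\<^sup>2) \<le> norm (F x)" by simp
        qed
      qed
      moreover have "(cmod (y 2 a))\<^sup>2 \<noteq> 0" using ne by (simp add: y_def)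
      ultimately show False by (rule Ici_not_finite)
    qed
  next
    assume y2a: "(u a z *v w) $ 2 = 0"
    have "set_integrable lborel {0..a} F" using continuous_on_subset[OF cF]
      by (intro borel_integrable_atLeastAtMost') auto
    moreover have "set_integrable lborel {a..} F"
    proof -
      let ?K = "(cmod (y 1 a))\<^sup>2 * exp (2 * Im z * a)"
      have "set_integrable lborel {0<..} (\<lambda>x. exp (- (x * (2 * Im z))))"
        using z by (intro integrable_I0i_exp_mscale) simp
      then have "set_integrable lborel {a..} (\<lambda>x. exp (- (x * (2 * Im z))))"
        by (rule set_integrable_subset) (use a in auto)
      then have "set_integrable lborel {a..} (\<lambda>x. ?K * exp (- (x * (2 * Im z))))"
        by (rule set_integrable_mult_right)
      then show ?thesis
      proof (rule set_integrable_bound)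
        show "set_borel_measurable lborel {a..} F" using a by (intro mF) auto
        show "AE x in lborel. x \<in> {a..} \<longrightarrow> norm (F x) \<le> norm (?K * exp (- (x * (2 * Im z))))"
        proof (intro AE_I2 impI)
          fix x assume "x \<in> {a..}"
          then have x: "x \<ge> a" by simp
          have "cmod (y 2 x) = 0" using y2[OF x] y2a by (simp add: y_def)
          then have "F x = (exp (- Im z * (x - a)) * cmod (y 1 a))\<^sup>2" by (simp add: F_def y1[OF x])
          also have "\<dots> = ?K * exp (- (x * (2 * Im z)))"
          proof -
            have "(exp (- Im z * (x - a)))\<^sup>2 = exp (2 * Im z * a) * exp (- (x * (2 * Im z)))"
              by (simp add: power2_eq_square algebra_simps flip: exp_add)
            then show ?thesis by (simp add: power_mult_distrib)
          qed
          finally show "norm (F x) \<le> norm (?K * exp (- (x * (2 * Im z))))" by simp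
        qed
      qed
    qed
    ultimately have "set_integrable lborel ({0..a} \<union> {a..}) F"
      by (rule set_integrable_Un) auto
    then have "set_integrable lborel {0<..} F" by (rule set_integrable_subset) auto
    then show "square_integrable_on (\<lambda>x. u x z *v w) {0<..}"
      using mv nF by (simp add: square_integrable_on_def)
  qed
qed



lemma key:
  fixes u :: "real \<Rightarrow> complex \<Rightarrow> complex^2^2"
  assumes fs: "fundamental_solution (dirac_coeff c a) a u" and a: "a > 0" and c: "c \<noteq> 0"
    and z: "Im z > 0"
  shows "square_integrable_on (\<lambda>x. u x z *v vector [1, p]) {0<..} \<longleftrightarrow> p = psi c a z ((cmod c)\<^sup>2)"
proof -
  define lam where "lam = (cmod c)\<^sup>2"
  have lam: "lam > 0" using c by (simp add: lam_def)
  define q where "q = qroot z lam"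
  have q2: "q\<^sup>2 = z\<^sup>2 - of_real lam" and qi: "Im q > 0" using qroot_props[OF z lam] by (auto simp: q_def)
  define E where "E = exp (2 * \<i> * of_real a * q)"
  define D where "D = z + q - (z - q) * E"
  have D: "D \<noteq> 0" unfolding D_def E_def by (rule denom_nz[OF z lam q2 qi a])
  have rel: "2 * q * (u a z *v vector [1, p]) $ 2 * exp (\<i> * q * of_real a) = \<i> * cnj c * (E - 1) + p * D"
    using inner_relation[OF fs a, of q z p] q2 by (simp add: lam_def E_def D_def)
  have nz: "2 * q * exp (\<i> * q * of_real a) \<noteq> 0" using qi by auto
  have psi: "psi c a z lam = \<i> * cnj c * (1 - E) / D"
    by (simp add: psi_def Let_def q_def E_def D_def)
  have "square_integrable_on (\<lambda>x. u x z *v vector [1, p]) {0<..} \<longleftrightarrow> (u a z *v vector [1, p]) $ 2 = 0"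
    by (rule sq_int_iff[OF fs a z])
  also have "\<dots> \<longleftrightarrow> \<i> * cnj c * (E - 1) + p * D = 0"
  proof -
    have "(u a z *v vector [1, p]) $ 2 = 0 \<longleftrightarrow> 2 * q * (u a z *v vector [1, p]) $ 2 * exp (\<i> * q * of_real a) = 0"
      using nz by auto
    then show ?thesis unfolding rel .
  qed
  also have "\<dots> \<longleftrightarrow> p = psi c a z lam"
    using D unfolding psi by (auto simp: field_simps)
  finally show ?thesis by (simp add: lam_def)
qed

theorem lemmaA6:
  fixes a :: real and c :: complex and u :: "real \<Rightarrow> complex \<Rightarrow> complex^2^2"
  assumes "a > 0" and "c \<noteq> 0"
    and "fundamental_solution (dirac_coeff c a) a u"
  shows "weyl_property u (\<lambda>z. psi c a z ((cmod c)\<^sup>2))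
         \<and> (\<forall>\<phi>. weyl_property u \<phi> \<longrightarrow>
               (\<forall>z. Im z > 0 \<longrightarrow> \<phi> z = psi c a z ((cmod c)\<^sup>2)))"
proof
  have lam: "(cmod c)\<^sup>2 > 0" using assms(2) by simp
  show "weyl_property u (\<lambda>z. psi c a z ((cmod c)\<^sup>2))"
    unfolding weyl_property_def
    using psi_holo[OF assms(1) lam, of c] key[OF assms(3) assms(1) assms(2)] by auto
  show "\<forall>\<phi>. weyl_property u \<phi> \<longrightarrow> (\<forall>z. Im z > 0 \<longrightarrow> \<phi> z = psi c a z ((cmod c)\<^sup>2))"
    unfolding weyl_property_def
    using key[OF assms(3) assms(1) assms(2)] by blast
qed


end
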